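(* Let $v,w\in\mathbb C\cong\mathbb R^2$ form a positively oriented basis, let $\vartheta\in(0,\pi)$ be the angle from $v$ to $w$, and let $H:S^1\to S^1$ be the holonomy obtained by moving the tracer point of a Prytz planimeter of length $\ell$ around the parallelogram with successive vertices $0,v,v+w,w,0$ (base point $0$). Then $H$ is the restriction to $S^1$ of $z\mapsto\frac{\alpha z+\beta}{\bar\beta z+\bar\alpha}$ for a matrix $\begin{pmatrix}\alpha&\beta\\ \bar\beta&\bar\alpha\end{pmatrix}\in SU(1,1)$ with trace $$2-4\,s^2,\qquad s=\sinh\!\Big(\frac{|v|}{2\ell}\Big)\sinh\!\Big(\frac{|w|}{2\ell}\Big)\sin\vartheta.$$ Consequently, if $s>1$ then $H$ has exactly two fixed points on $S^1$, one attracting and one repelling; if $s<1$ then $H$ has no fixed points on $S^1$. *)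

theory Defs
  imports "HOL-Analysis.Analysis"
begin

text \<open>Prytz planimeter: the tracer point follows the path gamma, the rod has length l and
  unit direction u (a point of the unit circle); the blade sits at gamma + l u and can only
  move in the direction of the rod.  Writing u' = i omega u, the no-slip condition
  Im((gamma' + l u') * cnj u) = 0 gives omega = - Im(gamma' * cnj u) / l.\<close>

definition prytz_ode :: "real \<Rightarrow> complex \<Rightarrow> complex \<Rightarrow> complex" where
  "prytz_ode l d u = - (\<i> * complex_of_real (Im (d * cnj u) / l)) * u"

definition prytz_transport ::
  "real \<Rightarrow> (real \<Rightarrow> complex) \<Rightarrow> complex \<Rightarrow> (real \<Rightarrow> complex) \<Rightarrow> bool" where
  "prytz_transport l \<gamma> z u \<longleftrightarrow>
     continuous_on {0..1} u \<and> u 0 = z \<and>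
     (\<exists>S. finite S \<and> (\<forall>t\<in>{0<..<1} - S.
        \<gamma> differentiable at t \<and>
        (u has_vector_derivative prytz_ode l (vector_derivative \<gamma> (at t)) (u t)) (at t)))"

definition prytz_holonomy :: "real \<Rightarrow> (real \<Rightarrow> complex) \<Rightarrow> complex \<Rightarrow> complex" where
  "prytz_holonomy l \<gamma> z = (THE w. \<exists>u. prytz_transport l \<gamma> z u \<and> u 1 = w)"

definition parallelogram_path :: "complex \<Rightarrow> complex \<Rightarrow> real \<Rightarrow> complex" where
  "parallelogram_path v w =
     (linepath 0 v +++ linepath v (v + w)) +++ (linepath (v + w) w +++ linepath w 0)"

definition circle_attracting_fp :: "(complex \<Rightarrow> complex) \<Rightarrow> complex \<Rightarrow> bool" where
  "circle_attracting_fp H z \<longleftrightarrow> cmod z = 1 \<and> H z = z \<and>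
     (\<exists>\<epsilon>>0. \<forall>y. cmod y = 1 \<and> cmod (y - z) < \<epsilon> \<longrightarrow> (\<lambda>n. (H ^^ n) y) \<longlonglongrightarrow> z)"

definition circle_repelling_fp :: "(complex \<Rightarrow> complex) \<Rightarrow> complex \<Rightarrow> bool" where
  "circle_repelling_fp H z \<longleftrightarrow> cmod z = 1 \<and> H z = z \<and>
     (\<exists>\<epsilon>>0. \<forall>y. cmod y = 1 \<and> 0 < cmod (y - z) \<and> cmod (y - z) < \<epsilon> \<longrightarrow>
        (\<exists>n. cmod ((H ^^ n) y - z) \<ge> \<epsilon>))"

end

theory Submission
  imports Defs
begin


definition mob :: "complex \<Rightarrow> complex \<Rightarrow> complex \<Rightarrow> complex" where
  "mob a b z = (a * z + b) / (cnj b * z + cnj a)"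

definition su :: "complex \<Rightarrow> complex \<Rightarrow> bool" where
  "su a b \<longleftrightarrow> a * cnj a - b * cnj b = 1"

lemma su_cmod: "su a b \<longleftrightarrow> (cmod a)\<^sup>2 - (cmod b)\<^sup>2 = 1"
proof -
  have "a * cnj a - b * cnj b = complex_of_real ((cmod a)\<^sup>2 - (cmod b)\<^sup>2)"
    by (simp add: complex_norm_square[symmetric])
  then show ?thesis unfolding su_def by (metis of_real_eq_1_iff)
qed

lemma circ: "cmod z = 1 \<longleftrightarrow> z * cnj z = 1"
  by (metis complex_norm_square norm_ge_zero of_real_1 of_real_eq_iff power_one real_sqrt_abs real_sqrt_one abs_of_nonneg power2_eq_1_iff)

lemma mob_den_nz:
  assumes "su a b" "cmod z = 1" shows "cnj b * z + cnj a \<noteq> 0"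
proof
  assume "cnj b * z + cnj a = 0"
  then have "cnj a = - (cnj b * z)" by (simp add: add_eq_0_iff)
  then have "cmod a = cmod b" using assms(2) by (metis complex_mod_cnj norm_minus_cancel norm_mult mult.right_neutral)
  with assms(1) show False by (simp add: su_cmod)
qed

lemma mob_circle:
  assumes "su a b" "cmod z = 1" shows "cmod (mob a b z) = 1"
proof -
  have zz: "z * cnj z = 1" using assms(2) circ by blast
  have d: "cnj b * z + cnj a \<noteq> 0" using mob_den_nz assms by blast
  have "(a*z+b)*cnj(a*z+b) - (cnj b*z+cnj a)*cnj(cnj b*z+cnj a) = (a*cnj a - b*cnj b)*(z*cnj z - 1)"
    by (simp add: algebra_simps)
  then have "(a*z+b)*cnj(a*z+b) = (cnj b*z+cnj a)*cnj(cnj b*z+cnj a)" using zz by simp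
  then have "cmod (a*z+b) = cmod (cnj b*z+cnj a)"
    by (metis complex_norm_square norm_ge_zero of_real_eq_iff power2_eq_iff_nonneg)
  then show ?thesis using d by (simp add: mob_def norm_divide)
qed

definition mmul :: "complex \<times> complex \<Rightarrow> complex \<times> complex \<Rightarrow> complex \<times> complex" where
  "mmul P Q = (fst P * fst Q + snd P * cnj (snd Q), fst P * snd Q + snd P * cnj (fst Q))"

lemma su_mmul: "su a1 b1 \<Longrightarrow> su a2 b2 \<Longrightarrow> su (fst (mmul (a1,b1) (a2,b2))) (snd (mmul (a1,b1) (a2,b2)))"
proof -
  assume h: "su a1 b1" "su a2 b2"
  have "(a1 * a2 + b1 * cnj b2) * cnj (a1 * a2 + b1 * cnj b2) - (a1 * b2 + b1 * cnj a2) * cnj (a1 * b2 + b1 * cnj a2)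
     = (a1*cnj a1 - b1*cnj b1) * (a2*cnj a2 - b2*cnj b2)" by (simp add: algebra_simps)
  then show ?thesis using h by (simp add: su_def mmul_def)
qed

lemma mob_comp:
  assumes "su a1 b1" "su a2 b2" "cmod z = 1"
  shows "mob a1 b1 (mob a2 b2 z) = mob (fst (mmul (a1,b1) (a2,b2))) (snd (mmul (a1,b1) (a2,b2))) z"
proof -
  have d2: "cnj b2 * z + cnj a2 \<noteq> 0" using mob_den_nz assms by blast
  have c2: "cmod (mob a2 b2 z) = 1" using mob_circle assms by blast
  have d1: "cnj b1 * mob a2 b2 z + cnj a1 \<noteq> 0" using mob_den_nz assms(1) c2 by blast
  have e: "cnj b1 * (a2 * z + b2) + cnj a1 * (cnj b2 * z + cnj a2) \<noteq> 0"
    using d1 d2 unfolding mob_def by (simp add: field_simps)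
  have 1: "mob a1 b1 (mob a2 b2 z) = (a1 * (a2 * z + b2) + b1 * (cnj b2 * z + cnj a2)) / (cnj b1 * (a2 * z + b2) + cnj a1 * (cnj b2 * z + cnj a2))"
  proof -
    let ?N = "a2 * z + b2" and ?D = "cnj b2 * z + cnj a2"
    have x: "a1*(?N/?D)+b1 = (a1*?N + b1*?D)/?D" using d2 by (simp add: field_simps)
    have y: "cnj b1*(?N/?D)+cnj a1 = (cnj b1*?N + cnj a1*?D)/?D" using d2 by (simp add: field_simps)
    show ?thesis unfolding mob_def x y using d2 by simp
  qed
  have 2: "a1 * (a2 * z + b2) + b1 * (cnj b2 * z + cnj a2) = fst (mmul (a1,b1) (a2,b2)) * z + snd (mmul (a1,b1) (a2,b2))"
    by (simp add: mmul_def algebra_simps)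
  have 3: "cnj b1 * (a2 * z + b2) + cnj a1 * (cnj b2 * z + cnj a2) = cnj (snd (mmul (a1,b1) (a2,b2))) * z + cnj (fst (mmul (a1,b1) (a2,b2)))"
    by (simp add: mmul_def algebra_simps)
  show ?thesis unfolding 1 2 3 by (simp only: mob_def)
qed



lemma fixed_iff:
  assumes "su a b" "cmod z = 1"
  shows "mob a b z = z \<longleftrightarrow> Im (cnj b * z) = Im a"
proof -
  have zz: "z * cnj z = 1" using assms(2) circ by blast
  have den: "cnj b * z + cnj a \<noteq> 0" using mob_den_nz assms by blast
  have cz: "cnj z \<noteq> 0" using zz by auto
  have "mob a b z = z \<longleftrightarrow> a*z+b = z*(cnj b*z + cnj a)"
    using den by (simp add: mob_def divide_eq_eq)
  also have "\<dots> \<longleftrightarrow> cnj z*(a*z+b) = cnj z*(z*(cnj b*z+cnj a))"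
    using cz by simp
  also have "\<dots> \<longleftrightarrow> a + b*cnj z = cnj b*z + cnj a"
  proof -
    have "cnj z*(a*z+b) = a*(z*cnj z) + b*cnj z" by (simp add: algebra_simps)
    also have "\<dots> = a + b*cnj z" using zz by simp
    finally have 1: "cnj z*(a*z+b) = a + b*cnj z" .
    have "cnj z*(z*(cnj b*z+cnj a)) = (z*cnj z)*(cnj b*z+cnj a)" by (simp add: algebra_simps)
    also have "\<dots> = cnj b*z+cnj a" using zz by simp
    finally have 2: "cnj z*(z*(cnj b*z+cnj a)) = cnj b*z+cnj a" .
    show ?thesis unfolding 1 2 ..
  qed
  also have "\<dots> \<longleftrightarrow> cnj b*z - cnj(cnj b*z) = a - cnj a"
    by (auto simp: algebra_simps)
  also have "\<dots> \<longleftrightarrow> Im (cnj b * z) = Im a"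
    by (simp add: complex_eq_iff algebra_simps) linarith
  finally show ?thesis .
qed

lemma circ_sq: "cmod z = 1 \<Longrightarrow> cmod (cnj b * z) = cmod b"
  by (simp add: norm_mult)

lemma su_sq: "su a b \<Longrightarrow> (cmod b)\<^sup>2 = (Re a)\<^sup>2 + (Im a)\<^sup>2 - 1"
  by (simp add: su_cmod cmod_power2[of a])

lemma elliptic_nofix:
  assumes "su a b" "-1 < Re a" "Re a < 1" "cmod z = 1"
  shows "mob a b z \<noteq> z"
proof
  assume "mob a b z = z"
  then have i: "Im (cnj b * z) = Im a" using fixed_iff assms by blast
  have "(cmod (cnj b * z))\<^sup>2 = (Re a)\<^sup>2 + (Im a)\<^sup>2 - 1" using circ_sq[OF assms(4)] su_sq[OF assms(1)] by simp
  then have "(Re (cnj b * z))\<^sup>2 = (Re a)\<^sup>2 - 1" using i by (simp add: cmod_power2)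
  moreover have "(Re a)\<^sup>2 < 1" using assms(2,3) by (simp add: abs_square_less_1)
  ultimately show False by (metis diff_less_0_iff_less zero_le_power2 not_less)
qed

lemma mob_diff:
  assumes "su a b" "cnj b * z + cnj a \<noteq> 0" "cnj b * w + cnj a \<noteq> 0"
  shows "mob a b z - mob a b w = (z - w) / ((cnj b * z + cnj a) * (cnj b * w + cnj a))"
proof -
  have "(a*z+b)*(cnj b * w + cnj a) - (a*w+b)*(cnj b * z + cnj a) = (a*cnj a - b*cnj b)*(z-w)"
    by (simp add: algebra_simps)
  then have e: "(a*z+b)*(cnj b * w + cnj a) - (a*w+b)*(cnj b * z + cnj a) = z - w"
    using assms(1) by (simp add: su_def)
  show ?thesis unfolding mob_def using assms(2,3) e[symmetric] by (simp add: field_simps)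
qed



lemma inv_rho:
  fixes x p q :: complex
  assumes "x \<noteq> q" "p \<noteq> q"
  shows "x = (p - q*((x-p)/(x-q))) / (1 - (x-p)/(x-q))"
proof -
  have xq: "x - q \<noteq> 0" using assms by simp
  have pq: "p - q \<noteq> 0" using assms by simp
  have 1: "1 - (x-p)/(x-q) = (p - q)/(x - q)" using xq by (simp add: field_simps)
  have 2: "p - q*((x-p)/(x-q)) = x*(p - q)/(x - q)" using xq by (simp add: field_simps)
  have 3: "(x*(p - q)/(x - q)) / ((p - q)/(x - q)) = x" using xq pq by simp
  show ?thesis unfolding 1 2 3 ..
qed

lemma frac_aux:
  fixes A B X P Q :: complex
  assumes "X \<noteq> 0" "P \<noteq> 0" "Q \<noteq> 0"
  shows "(A/(X*P))/(B/(X*Q)) = (Q/P)*(A/B)"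
  using assms by (simp add: field_simps)

lemma hyperbolic:
  fixes H :: "complex \<Rightarrow> complex"
  assumes su: "su a b" and ra: "Re a < -1" and hH: "\<And>z. cmod z = 1 \<Longrightarrow> H z = mob a b z"
  shows "\<exists>p q. p \<noteq> q \<and> {z. cmod z = 1 \<and> H z = z} = {p, q} \<and>
           circle_attracting_fp H p \<and> circle_repelling_fp H q"
proof -
  define r0 where "r0 = sqrt ((Re a)\<^sup>2 - 1)"
  have ra2: "(Re a)\<^sup>2 > 1" using ra proof -
    have "1 < (- Re a) * (- Re a)" using ra by (intro less_1_mult) auto
    then show ?thesis by (simp add: power2_eq_square)
  qed
  have r0pos: "r0 > 0" using ra2 by (simp add: r0_def)
  have r0sq: "r0\<^sup>2 = (Re a)\<^sup>2 - 1" using ra2 by (simp add: r0_def)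
  have r0lt: "r0 < - Re a"
  proof -
    have "r0 < sqrt ((Re a)\<^sup>2)" unfolding r0_def by (rule real_sqrt_less_mono) simp
    then show ?thesis using ra by simp
  qed
  have bsq: "(cmod b)\<^sup>2 = r0\<^sup>2 + (Im a)\<^sup>2" using su_sq[OF su] r0sq by simp
  have cb: "cnj b \<noteq> 0"
  proof
    assume "cnj b = 0" then have "b = 0" by simp
    then show False using bsq r0pos by simp
  qed
  define p where "p = Complex (-r0) (Im a) / cnj b"
  define q where "q = Complex r0 (Im a) / cnj b"
  have bp: "cnj b * p = Complex (-r0) (Im a)" using cb by (simp add: p_def)
  have bq: "cnj b * q = Complex r0 (Im a)" using cb by (simp add: q_def)
  have cmb: "cmod (Complex x (Im a)) = cmod b" if "x\<^sup>2 = r0\<^sup>2" for x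
  proof -
    have "(cmod (Complex x (Im a)))\<^sup>2 = (cmod b)\<^sup>2" using bsq that by (simp add: cmod_power2)
    then show ?thesis by (simp add: power2_eq_iff_nonneg)
  qed
  have pc: "cmod p = 1" unfolding p_def using cmb[of "-r0"] cb by (simp add: norm_divide)
  have qc: "cmod q = 1" unfolding q_def using cmb[of "r0"] cb by (simp add: norm_divide)
  have pq: "p \<noteq> q"
  proof
    assume "p = q" then have "cnj b * p = cnj b * q" by simp
    then show False using bp bq r0pos by simp
  qed
  have pf: "mob a b p = p" using fixed_iff[OF su pc] bp by simp
  have qf: "mob a b q = q" using fixed_iff[OF su qc] bq by simp
  have fixset: "{z. cmod z = 1 \<and> H z = z} = {p, q}"
  proof (rule set_eqI, rule iffI)
    fix z assume "z \<in> {z. cmod z = 1 \<and> H z = z}"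
    then have zc: "cmod z = 1" and "mob a b z = z" using hH by auto
    then have i: "Im (cnj b * z) = Im a" using fixed_iff[OF su] by blast
    have "(cmod (cnj b * z))\<^sup>2 = r0\<^sup>2 + (Im a)\<^sup>2" using circ_sq[OF zc] bsq by simp
    then have "(Re (cnj b * z))\<^sup>2 = r0\<^sup>2" using i by (simp add: cmod_power2)
    then have "Re (cnj b * z) = r0 \<or> Re (cnj b * z) = - r0" by (simp add: power2_eq_iff)
    then have "cnj b * z = cnj b * q \<or> cnj b * z = cnj b * p" using i bp bq by (auto simp: complex_eq_iff)
    then show "z \<in> {p, q}" using cb by auto
  next
    fix z assume "z \<in> {p, q}"
    then show "z \<in> {z. cmod z = 1 \<and> H z = z}" using pc qc pf qf hH by auto
  qed
  have Dp: "cnj b * p + cnj a \<noteq> 0" using mob_den_nz[OF su pc] .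
  have Dq: "cnj b * q + cnj a \<noteq> 0" using mob_den_nz[OF su qc] .
  define k where "k = (cnj b * q + cnj a) / (cnj b * p + cnj a)"
  have kval: "k = of_real ((Re a + r0) / (Re a - r0))"
  proof -
    have 1: "cnj b * q + cnj a = of_real (Re a + r0)" using bq by (simp add: complex_eq_iff)
    have 2: "cnj b * p + cnj a = of_real (Re a - r0)" using bp by (simp add: complex_eq_iff)
    show ?thesis unfolding k_def 1 2 by simp
  qed
  have kn: "norm k < 1"
  proof -
    have "norm k = \<bar>Re a + r0\<bar> / \<bar>Re a - r0\<bar>" unfolding kval norm_of_real by simp
    also have "\<dots> = (- Re a - r0) / (- Re a + r0)" using r0lt r0pos by simp
    also have "\<dots> < 1" using r0lt r0pos by simp
    finally show ?thesis .
  qed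
  have key: "mob a b z \<noteq> q \<and> (mob a b z - p)/(mob a b z - q) = k * ((z - p)/(z - q))"
    if zc: "cmod z = 1" and zq: "z \<noteq> q" for z
  proof -
    have Dz: "cnj b * z + cnj a \<noteq> 0" using mob_den_nz[OF su zc] .
    have e1: "mob a b z - q = (z - q) / ((cnj b * z + cnj a) * (cnj b * q + cnj a))"
      using mob_diff[OF su Dz Dq] qf by simp
    have e2: "mob a b z - p = (z - p) / ((cnj b * z + cnj a) * (cnj b * p + cnj a))"
      using mob_diff[OF su Dz Dp] pf by simp
    have zq': "z - q \<noteq> 0" using zq by simp
    have "mob a b z - q \<noteq> 0" unfolding e1 using zq' Dz Dq by simp
    moreover have "(mob a b z - p)/(mob a b z - q) = k * ((z - p)/(z - q))"
      unfolding e1 e2 k_def using frac_aux[OF Dz Dp Dq] by simp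
    ultimately show ?thesis by simp
  qed
  have iter: "cmod ((mob a b ^^ n) y) = 1 \<and> (mob a b ^^ n) y \<noteq> q \<and>
      ((mob a b ^^ n) y - p)/((mob a b ^^ n) y - q) = k^n * ((y-p)/(y-q))"
    if yc: "cmod y = 1" and yq: "y \<noteq> q" for y n
  proof (induction n)
    case 0 then show ?case using yc yq by simp
  next
    case (Suc n)
    then show ?case using key[of "(mob a b ^^ n) y"] mob_circle[OF su, of "(mob a b ^^ n) y"] by simp
  qed
  have Hiter: "(H ^^ n) y = (mob a b ^^ n) y \<and> cmod ((H ^^ n) y) = 1" if yc: "cmod y = 1" for y n
  proof (induction n)
    case 0 then show ?case using yc by simp
  next
    case (Suc n)
    then show ?case using hH[of "(H ^^ n) y"] mob_circle[OF su, of "(H ^^ n) y"] by auto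
  qed
  have conv: "(\<lambda>n. (H ^^ n) y) \<longlonglongrightarrow> p" if yc: "cmod y = 1" and yq: "y \<noteq> q" for y
  proof -
    define \<rho> where "\<rho> = (y-p)/(y-q)"
    have eq: "(H ^^ n) y = (p - q*(k^n*\<rho>)) / (1 - k^n*\<rho>)" for n
    proof -
      have m: "(mob a b ^^ n) y \<noteq> q" and r: "((mob a b ^^ n) y - p)/((mob a b ^^ n) y - q) = k^n*\<rho>"
        using iter[OF yc yq, of n] unfolding \<rho>_def by auto
      have "(mob a b ^^ n) y = (p - q*(k^n*\<rho>)) / (1 - k^n*\<rho>)"
        using inv_rho[OF m pq] unfolding r .
      then show ?thesis using Hiter[OF yc, of n] by simp
    qed
    have "(\<lambda>n. (p - q*(k^n*\<rho>)) / (1 - k^n*\<rho>)) \<longlonglongrightarrow> (p - q*(0*\<rho>)) / (1 - 0*\<rho>)"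
      by (intro tendsto_intros LIMSEQ_power_zero kn) simp
    then show ?thesis unfolding eq by simp
  qed
  have eps: "cmod (p - q) > 0" using pq by simp
  have att: "circle_attracting_fp H p"
    unfolding circle_attracting_fp_def
  proof (intro conjI exI[of _ "cmod (p - q)"] allI impI)
    show "cmod p = 1" by (rule pc)
    show "H p = p" using hH[OF pc] pf by simp
    show "cmod (p - q) > 0" by (rule eps)
    fix y assume "cmod y = 1 \<and> cmod (y - p) < cmod (p - q)"
    then have yc: "cmod y = 1" and "y \<noteq> q" by (auto simp: norm_minus_commute)
    then show "(\<lambda>n. (H ^^ n) y) \<longlonglongrightarrow> p" using conv by blast
  qed
  have rep: "circle_repelling_fp H q"
    unfolding circle_repelling_fp_def
  proof (intro conjI exI[of _ "cmod (p - q) / 2"] allI impI)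
    show "cmod q = 1" by (rule qc)
    show "H q = q" using hH[OF qc] qf by simp
    show "cmod (p - q) / 2 > 0" using eps by simp
    fix y assume h: "cmod y = 1 \<and> 0 < cmod (y - q) \<and> cmod (y - q) < cmod (p - q) / 2"
    then have yc: "cmod y = 1" and "y \<noteq> q" by auto
    then have c: "(\<lambda>n. (H ^^ n) y) \<longlonglongrightarrow> p" using conv by blast
    have "eventually (\<lambda>n. dist ((H ^^ n) y) p < cmod (p - q) / 2) sequentially"
      by (rule tendstoD[OF c]) (use eps in simp)
    then obtain N where "\<forall>n\<ge>N. dist ((H ^^ n) y) p < cmod (p - q) / 2"
      unfolding eventually_sequentially by blast
    then have n: "dist ((H ^^ N) y) p < cmod (p - q) / 2" by simp
    define n where "n = N"
    have n: "dist ((H ^^ n) y) p < cmod (p - q) / 2" using n unfolding n_def .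
    have "cmod (p - q) \<le> cmod ((H ^^ n) y - p) + cmod ((H ^^ n) y - q)"
      proof -
      have "p - q = ((H ^^ n) y - q) - ((H ^^ n) y - p)" by simp
      then show ?thesis using norm_triangle_ineq4[of "(H ^^ n) y - q" "(H ^^ n) y - p"] by simp
    qed
    then have "cmod ((H ^^ n) y - q) \<ge> cmod (p - q) / 2" using n by (simp add: dist_norm)
    then show "\<exists>n. cmod ((H ^^ n) y - q) \<ge> cmod (p - q) / 2" by blast
  qed
  show ?thesis using pq fixset att rep by blast
qed



definition Phi :: "real \<Rightarrow> complex \<Rightarrow> real \<Rightarrow> complex \<Rightarrow> complex" where
  "Phi l d \<tau> z = mob (of_real (cosh (\<tau> * (cmod d / (2*l))))) (- (of_real (sinh (\<tau> * (cmod d / (2*l)))) * sgn d)) z"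

lemma sgn_cnj: "d \<noteq> 0 \<Longrightarrow> sgn d * cnj (sgn d) = (1::complex)"
  by (metis circ norm_sgn)

lemma cs_id: "complex_of_real (cosh x) * of_real (cosh x) - of_real (sinh x) * of_real (sinh x) = 1"
proof -
  have "cosh x * cosh x - sinh x * sinh x = 1" using cosh_square_eq[of x] by (simp add: power2_eq_square)
  then show ?thesis by (metis of_real_1 of_real_diff of_real_mult)
qed

lemma su_boost: "d \<noteq> 0 \<Longrightarrow> su (of_real (cosh x)) (c * (of_real (sinh x) * sgn d))" if "c = 1 \<or> c = -1"
proof -
  assume d: "d \<noteq> 0"
  have e: "sgn d * cnj (sgn d) = 1" using sgn_cnj[OF d] .
  have cc: "c * cnj c = 1" using that by auto
  have "of_real (cosh x) * cnj (of_real (cosh x)) - (c * (of_real (sinh x) * sgn d)) * cnj (c * (of_real (sinh x) * sgn d))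
     = complex_of_real (cosh x) * of_real (cosh x) - of_real (sinh x) * of_real (sinh x) * (sgn d * cnj (sgn d)) * (c * cnj c)"
    by (simp add: algebra_simps)
  also have "\<dots> = 1" using e cc cs_id by simp
  finally show ?thesis unfolding su_def .
qed

lemma su_Phi: "d \<noteq> 0 \<Longrightarrow> su (of_real (cosh (\<tau> * (cmod d / (2*l))))) (- (of_real (sinh (\<tau> * (cmod d / (2*l)))) * sgn d))"
  using su_boost[of "-1"] by simp

lemma Im_as: "complex_of_real (Im x) = - \<i> * (x - cnj x) / 2"
  by (simp add: complex_eq_iff)

lemma ode_riccati:
  assumes "u * cnj u = 1" "l \<noteq> 0"
  shows "prytz_ode l d u = (cnj d * u^2 - d) / (2 * of_real l)"
proof -
  have 1: "complex_of_real (Im (d * cnj u) / l) = - \<i> * (d * cnj u - cnj d * u) / (2 * of_real l)"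
    unfolding of_real_divide Im_as by simp
  have "prytz_ode l d u = - (\<i> * (- \<i> * (d * cnj u - cnj d * u) / (2 * of_real l))) * u"
    unfolding prytz_ode_def 1 ..
  also have "\<dots> = (cnj d * u^2 - d * (u * cnj u)) / (2 * of_real l)"
    using assms(2) by (simp add: field_simps power2_eq_square)
  finally show ?thesis using assms(1) by simp
qed

lemma vd_quot:
  fixes f g :: "real \<Rightarrow> complex"
  assumes "(f has_vector_derivative f') (at x within s)" "(g has_vector_derivative g') (at x within s)" "g x \<noteq> 0"
  shows "((\<lambda>x. f x / g x) has_vector_derivative ((f' * g x - f x * g') / (g x)^2)) (at x within s)"
proof -
  have "((\<lambda>x. f x / g x) has_derivative
     (\<lambda>h. - f x * (inverse (g x) * (h *\<^sub>R g') * inverse (g x)) + (h *\<^sub>R f') / g x)) (at x within s)"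
    using has_derivative_divide[OF assms(1,2)[unfolded has_vector_derivative_def] assms(3)] .
  moreover have "(\<lambda>h. - f x * (inverse (g x) * (h *\<^sub>R g') * inverse (g x)) + (h *\<^sub>R f') / g x)
      = (\<lambda>h. h *\<^sub>R ((f' * g x - f x * g') / (g x)^2))"
    using assms(3) by (auto simp: scaleR_conv_of_real field_simps power2_eq_square)
  ultimately show ?thesis unfolding has_vector_derivative_def by simp
qed

lemma alg1:
  fixes C S e E z K Dn :: complex
  assumes "e*E = 1" "C*C - S*S = 1" "Dn \<noteq> 0" "Dn = -(S*E)*z + C"
  shows "((S*K*z - C*K*e)*Dn - (C*z - S*e)*(-(C*K*E)*z + S*K))/Dn^2 = K*(E*((C*z - S*e)/Dn)^2 - e)"
proof -
  have "(S*K*z - C*K*e)*Dn - (C*z - S*e)*(-(C*K*E)*z + S*K) = K*(E*(C*z - S*e)^2 - e*Dn^2)"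
    using assms(1,2,4) by algebra
  then show ?thesis using assms(3) by (simp add: field_simps)
qed

lemma Phi_deriv:
  assumes l: "l > 0" and d: "d \<noteq> 0" and z: "cmod z = 1"
  shows "((\<lambda>\<tau>. Phi l d \<tau> z) has_vector_derivative prytz_ode l d (Phi l d \<tau> z)) (at \<tau> within X)"
proof -
  define k where "k = cmod d / (2*l)"
  define e where "e = sgn d"
  define C where "C = (\<lambda>\<tau>. complex_of_real (cosh (\<tau> * k)))"
  define S where "S = (\<lambda>\<tau>. complex_of_real (sinh (\<tau> * k)))"
  have ee: "e * cnj e = 1" unfolding e_def using sgn_cnj[OF d] .
  have Pe: "Phi l d t z = (C t * z - S t * e) / (-(S t * cnj e) * z + C t)" for t
    unfolding Phi_def mob_def C_def S_def e_def k_def by (simp add: algebra_simps)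
  have dC: "(C has_vector_derivative (S \<tau> * of_real k)) (at \<tau> within X)"
  proof -
    have "((\<lambda>\<tau>. cosh (\<tau> * k)) has_real_derivative (sinh (\<tau> * k) * k)) (at \<tau> within X)"
      by (auto intro!: derivative_eq_intros)
    from has_vector_derivative_of_real[OF this] show ?thesis unfolding C_def S_def by simp
  qed
  have dS: "(S has_vector_derivative (C \<tau> * of_real k)) (at \<tau> within X)"
  proof -
    have "((\<lambda>\<tau>. sinh (\<tau> * k)) has_real_derivative (cosh (\<tau> * k) * k)) (at \<tau> within X)"
      by (auto intro!: derivative_eq_intros)
    from has_vector_derivative_of_real[OF this] show ?thesis unfolding C_def S_def by simp
  qed
  have dN: "((\<lambda>t. C t * z - S t * e) has_vector_derivative (S \<tau> * of_real k * z - C \<tau> * of_real k * e)) (at \<tau> within X)"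
    by (intro has_vector_derivative_diff has_vector_derivative_mult_left dC dS)
  have dD: "((\<lambda>t. -(S t * cnj e) * z + C t) has_vector_derivative (-(C \<tau> * of_real k * cnj e) * z + S \<tau> * of_real k)) (at \<tau> within X)"
    by (intro has_vector_derivative_add has_vector_derivative_mult_left has_vector_derivative_minus dC dS)
  have su1: "su (C \<tau>) (-(S \<tau> * e))" unfolding C_def S_def e_def k_def using su_Phi[OF d] by simp
  have Dn: "-(S \<tau> * cnj e) * z + C \<tau> \<noteq> 0" using mob_den_nz[OF su1 z] by (simp add: C_def S_def)
  have cs: "C \<tau> * C \<tau> - S \<tau> * S \<tau> = 1" unfolding C_def S_def by (rule cs_id)
  have circP: "cmod (Phi l d \<tau> z) = 1" unfolding Phi_def using mob_circle[OF su_Phi[OF d] z] .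
  have "prytz_ode l d (Phi l d \<tau> z) = (cnj d * (Phi l d \<tau> z)^2 - d) / (2 * of_real l)"
    using ode_riccati circP circ l by auto
  also have "\<dots> = of_real k * (cnj e * (Phi l d \<tau> z)^2 - e)"
  proof -
    have "d = of_real (cmod d) * e" unfolding e_def by (simp add: complex_sgn_def scaleR_conv_of_real field_simps) 
    then have "cnj d = of_real (cmod d) * cnj e" by (metis complex_cnj_complex_of_real complex_cnj_mult)
    then show ?thesis unfolding k_def using l \<open>d = of_real (cmod d) * e\<close>
      by (simp add: field_simps)
  qed
  also have "\<dots> = ((S \<tau> * of_real k * z - C \<tau> * of_real k * e) * (-(S \<tau> * cnj e) * z + C \<tau>)
       - (C \<tau> * z - S \<tau> * e) * (-(C \<tau> * of_real k * cnj e) * z + S \<tau> * of_real k)) / (-(S \<tau> * cnj e) * z + C \<tau>)^2"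
    unfolding Pe by (rule alg1[OF ee cs Dn refl, symmetric])
  finally have eq: "\<dots> = prytz_ode l d (Phi l d \<tau> z)" ..
  show ?thesis unfolding Pe
    by (rule has_vector_derivative_eq_rhs[OF vd_quot[OF dN dD Dn]]) (use eq Pe in simp)
qed



lemma alg2:
  fixes C S e E u p K :: complex
  assumes "e*E = 1" "p = K*(E*u^2 - e)"
  shows "(C*p + S*K*u + C*K*e)*(S*E*u + C) - (C*u + S*e)*(S*E*p + C*K*E*u + S*K) = 0"
  using assms by algebra

lemma rot_aux: "x * cnj (-(\<i> * complex_of_real r) * x) + (-(\<i> * complex_of_real r) * x) * cnj x = 0"
  by (simp add: algebra_simps)

lemma zero_deriv_const:
  fixes f :: "real \<Rightarrow> complex"
  assumes "finite S" "continuous_on {a..b} f"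
    "\<And>x. x \<in> {a<..<b} - S \<Longrightarrow> (f has_vector_derivative 0) (at x)"
    "t \<in> {a..b}"
  shows "f t = f a"
proof (rule has_derivative_zero_unique_strong_interval[of "S \<union> {a,b}" a b f "f a" t])
  show "finite (S \<union> {a,b})" using assms(1) by simp
  show "continuous_on {a..b} f" by (rule assms(2))
  show "f a = f a" ..
  show "t \<in> {a..b}" by (rule assms(4))
  fix x assume "x \<in> {a..b} - (S \<union> {a, b})"
  then have "x \<in> {a<..<b} - S" by auto
  from assms(3)[OF this] have "(f has_vector_derivative 0) (at x within {a..b})"
    by (rule has_vector_derivative_at_within)
  then show "(f has_derivative (\<lambda>h. 0)) (at x within {a..b})"
    by (simp add: has_vector_derivative_def)
qed

lemma seg_unique:
  assumes l: "l > 0" and d: "d \<noteq> 0" and cu: "continuous_on {a..b} u" and ua: "cmod (u a) = 1"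
    and S: "finite S"
    and du: "\<And>t. t \<in> {a<..<b} - S \<Longrightarrow> (u has_vector_derivative prytz_ode l d (u t)) (at t)"
    and t: "t \<in> {a..b}"
  shows "u t = Phi l d (t - a) (u a)"
proof -
  have circ_all: "u x * cnj (u x) = 1" if x: "x \<in> {a..b}" for x
  proof -
    have "u x * cnj (u x) = u a * cnj (u a)"
    proof (rule zero_deriv_const[OF S _ _ x, of "\<lambda>x. u x * cnj (u x)"])
      show "continuous_on {a..b} (\<lambda>x. u x * cnj (u x))"
        by (intro continuous_intros cu)
      fix y assume y: "y \<in> {a<..<b} - S"
      have "((\<lambda>x. u x * cnj (u x)) has_vector_derivative
          (u y * cnj (prytz_ode l d (u y)) + prytz_ode l d (u y) * cnj (u y))) (at y)"
        by (intro has_vector_derivative_mult has_vector_derivative_cnj du y)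
      moreover have "u y * cnj (prytz_ode l d (u y)) + prytz_ode l d (u y) * cnj (u y) = 0"
        unfolding prytz_ode_def by (rule rot_aux)
      ultimately show "((\<lambda>x. u x * cnj (u x)) has_vector_derivative 0) (at y)" by simp
    qed
    then show ?thesis using ua circ by simp
  qed
  define k where "k = cmod d / (2*l)"
  define e where "e = sgn d"
  define C where "C = (\<lambda>\<tau>. complex_of_real (cosh (\<tau> * k)))"
  define Sn where "Sn = (\<lambda>\<tau>. complex_of_real (sinh (\<tau> * k)))"
  have ee: "e * cnj e = 1" unfolding e_def using sgn_cnj[OF d] .
  have suP: "su (C \<tau>) (c * (Sn \<tau> * e))" if "c = 1 \<or> c = -1" for \<tau> c
    unfolding C_def Sn_def e_def using su_boost[OF that d] by simp
  define w where "w = (\<lambda>x. (C (x - a) * u x + Sn (x - a) * e) / (Sn (x - a) * cnj e * u x + C (x - a)))"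
  have wm: "w x = mob (C (x - a)) (Sn (x - a) * e) (u x)" for x
    unfolding w_def mob_def C_def Sn_def by simp
  have Dnz: "Sn (x - a) * cnj e * u x + C (x - a) \<noteq> 0" if x: "x \<in> {a..b}" for x
    using mob_den_nz[OF suP[of 1 "x - a"], of "u x"] circ_all[OF x] circ by (simp add: C_def Sn_def)
  have wconst: "w x = w a" if x: "x \<in> {a..b}" for x
  proof (rule zero_deriv_const[OF S _ _ x])
    show "continuous_on {a..b} w"
      unfolding w_def C_def Sn_def
      by (intro continuous_intros cu) (use Dnz in \<open>auto simp: C_def Sn_def\<close>)
    fix y assume y: "y \<in> {a<..<b} - S"
    then have yab: "y \<in> {a..b}" by auto
    have uy: "u y * cnj (u y) = 1" using circ_all[OF yab] .
    have ric: "prytz_ode l d (u y) = of_real k * (cnj e * (u y)^2 - e)"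
    proof -
      have dd: "d = of_real (cmod d) * e" unfolding e_def by (simp add: complex_sgn_def scaleR_conv_of_real field_simps)
      then have cd: "cnj d = of_real (cmod d) * cnj e" by (metis complex_cnj_complex_of_real complex_cnj_mult)
      have "prytz_ode l d (u y) = (cnj d * (u y)^2 - d) / (2 * of_real l)"
        using ode_riccati[OF uy] l by simp
      also have "\<dots> = of_real k * (cnj e * (u y)^2 - e)"
        using cd unfolding k_def using l dd by (simp add: field_simps)
      finally show ?thesis .
    qed
    have dC: "((\<lambda>x. C (x - a)) has_vector_derivative (Sn (y - a) * of_real k)) (at y)"
    proof -
      have "((\<lambda>x. cosh ((x - a) * k)) has_real_derivative (sinh ((y - a) * k) * k)) (at y)"
        by (auto intro!: derivative_eq_intros)
      from has_vector_derivative_of_real[OF this] show ?thesis unfolding C_def Sn_def by simp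
    qed
    have dS: "((\<lambda>x. Sn (x - a)) has_vector_derivative (C (y - a) * of_real k)) (at y)"
    proof -
      have "((\<lambda>x. sinh ((x - a) * k)) has_real_derivative (cosh ((y - a) * k) * k)) (at y)"
        by (auto intro!: derivative_eq_intros)
      from has_vector_derivative_of_real[OF this] show ?thesis unfolding C_def Sn_def by simp
    qed
    have dN: "((\<lambda>x. C (x - a) * u x + Sn (x - a) * e) has_vector_derivative
        (C (y - a) * prytz_ode l d (u y) + Sn (y - a) * of_real k * u y + C (y - a) * of_real k * e)) (at y)"
      using has_vector_derivative_add[OF has_vector_derivative_mult[OF dC du[OF y]] has_vector_derivative_mult_left[OF dS, of e]]
      by simp
    have dD: "((\<lambda>x. Sn (x - a) * cnj e * u x + C (x - a)) has_vector_derivative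
        (Sn (y - a) * cnj e * prytz_ode l d (u y) + C (y - a) * of_real k * cnj e * u y + Sn (y - a) * of_real k)) (at y)"
      using has_vector_derivative_add[OF has_vector_derivative_mult[OF has_vector_derivative_mult_left[OF dS, of "cnj e"] du[OF y]] dC]
      by simp
    have "(w has_vector_derivative
        (((C (y - a) * prytz_ode l d (u y) + Sn (y - a) * of_real k * u y + C (y - a) * of_real k * e) * (Sn (y - a) * cnj e * u y + C (y - a))
         - (C (y - a) * u y + Sn (y - a) * e) * (Sn (y - a) * cnj e * prytz_ode l d (u y) + C (y - a) * of_real k * cnj e * u y + Sn (y - a) * of_real k))
         / (Sn (y - a) * cnj e * u y + C (y - a))^2)) (at y)"
      unfolding w_def by (rule vd_quot[OF dN dD Dnz[OF yab]])
    moreover have "((C (y - a) * prytz_ode l d (u y) + Sn (y - a) * of_real k * u y + C (y - a) * of_real k * e) * (Sn (y - a) * cnj e * u y + C (y - a))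
         - (C (y - a) * u y + Sn (y - a) * e) * (Sn (y - a) * cnj e * prytz_ode l d (u y) + C (y - a) * of_real k * cnj e * u y + Sn (y - a) * of_real k)) = 0"
      by (rule alg2[OF ee ric])
    ultimately show "(w has_vector_derivative 0) (at y)" by simp
  qed
  have tab: "t \<in> {a..b}" by (rule t)
  have wa: "w a = u a" unfolding w_def C_def Sn_def by simp
  have ut1: "cmod (u t) = 1" using circ_all[OF tab] circ by simp
  have "mob (C (t - a)) ((-1) * (Sn (t - a) * e)) (w t) = mob (C (t - a)) ((-1) * (Sn (t - a) * e)) (mob (C (t - a)) (1 * (Sn (t - a) * e)) (u t))"
    unfolding wm by simp
  also have "\<dots> = mob (fst (mmul (C (t - a), (-1) * (Sn (t - a) * e)) (C (t - a), 1 * (Sn (t - a) * e))))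
                      (snd (mmul (C (t - a), (-1) * (Sn (t - a) * e)) (C (t - a), 1 * (Sn (t - a) * e)))) (u t)"
    by (rule mob_comp[OF suP suP ut1]) auto
  also have "\<dots> = mob 1 0 (u t)"
  proof -
    have "C (t - a) * C (t - a) - Sn (t - a) * Sn (t - a) = 1" unfolding C_def Sn_def by (rule cs_id)
    then have "fst (mmul (C (t - a), (-1) * (Sn (t - a) * e)) (C (t - a), 1 * (Sn (t - a) * e))) = 1"
      using ee unfolding mmul_def by (simp add: C_def Sn_def algebra_simps)
    moreover have "snd (mmul (C (t - a), (-1) * (Sn (t - a) * e)) (C (t - a), 1 * (Sn (t - a) * e))) = 0"
      unfolding mmul_def by (simp add: C_def Sn_def algebra_simps)
    ultimately show ?thesis by simp
  qed
  also have "\<dots> = u t" by (simp add: mob_def)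
  finally have "u t = mob (C (t - a)) (- (Sn (t - a) * e)) (u a)" using wconst[OF tab] wa by simp
  then show ?thesis unfolding Phi_def C_def Sn_def e_def k_def by simp
qed



lemma Phi_zero: "Phi l d 0 z = z"
  by (simp add: Phi_def mob_def)

lemma Phi_circle: "d \<noteq> 0 \<Longrightarrow> cmod z = 1 \<Longrightarrow> cmod (Phi l d \<tau> z) = 1"
  unfolding Phi_def by (rule mob_circle[OF su_Phi])

lemma Phi_deriv_shift:
  assumes "l > 0" "d \<noteq> 0" "cmod z = 1"
  shows "((\<lambda>t. Phi l d (t - c) z) has_vector_derivative prytz_ode l d (Phi l d (t - c) z)) (at t)"
proof -
  have 1: "((\<lambda>t. t - c) has_vector_derivative 1) (at t)"
    by (auto intro!: derivative_eq_intros)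
  have 2: "((\<lambda>\<tau>. Phi l d \<tau> z) has_vector_derivative prytz_ode l d (Phi l d (t - c) z)) (at (t - c))"
    by (rule Phi_deriv[OF assms])
  from vector_diff_chain_at[OF 1 2[unfolded]] show ?thesis by (simp add: o_def)
qed

lemma Phi_cont: "l > 0 \<Longrightarrow> d \<noteq> 0 \<Longrightarrow> cmod z = 1 \<Longrightarrow> continuous_on X (\<lambda>t. Phi l d (t - c) z)"
  by (rule continuous_on_vector_derivative, rule has_vector_derivative_at_within, rule Phi_deriv_shift)

lemma aff_deriv:
  fixes A B :: complex
  shows "((\<lambda>y. A + of_real (4*y) * B) has_vector_derivative (4 * B)) (at t)"
proof -
  have "((\<lambda>y. 4*y) has_real_derivative 4) (at t)" by (auto intro!: derivative_eq_intros)
  then have "((\<lambda>y. complex_of_real (4*y)) has_vector_derivative of_real 4) (at t)"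
    by (rule has_vector_derivative_of_real)
  then have "((\<lambda>y. A + of_real (4*y) * B) has_vector_derivative (0 + of_real 4 * B)) (at t)"
    by (intro has_vector_derivative_add has_vector_derivative_mult_left has_vector_derivative_const)
  then show ?thesis by simp
qed

lemma path_quarter:
  fixes \<gamma> :: "real \<Rightarrow> complex"
  assumes "t \<in> {lo<..<hi}" "\<And>y. y \<in> {lo<..<hi} \<Longrightarrow> \<gamma> y = A + of_real (4*y) * B"
  shows "\<gamma> differentiable at t \<and> vector_derivative \<gamma> (at t) = 4 * B"
proof -
  have "(\<gamma> has_vector_derivative 4 * B) (at t)"
    by (rule has_vector_derivative_transform_within_open[OF aff_deriv, of "{lo<..<hi}"]) (use assms in auto)
  then show ?thesis using vector_derivative_at differentiableI_vector by blast
qed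

lemma par_formula:
  fixes v w :: complex
  shows "y \<in> {0<..<1/4} \<Longrightarrow> parallelogram_path v w y = 0 + of_real (4*y) * v"
    and "y \<in> {1/4<..<1/2} \<Longrightarrow> parallelogram_path v w y = (v - w) + of_real (4*y) * w"
    and "y \<in> {1/2<..<3/4} \<Longrightarrow> parallelogram_path v w y = (3 * v + w) + of_real (4*y) * (-v)"
    and "y \<in> {3/4<..<1} \<Longrightarrow> parallelogram_path v w y = (4 * w) + of_real (4*y) * (-w)"
  by (auto simp: parallelogram_path_def joinpaths_def linepath_def scaleR_conv_of_real algebra_simps)

lemma par_deriv:
  fixes v w :: complex
  assumes "t \<in> {0<..<1} - {1/4, 1/2, 3/4}"
  shows "parallelogram_path v w differentiable at t"
    and "t \<in> {0<..<1/4} \<Longrightarrow> vector_derivative (parallelogram_path v w) (at t) = 4 * v"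
    and "t \<in> {1/4<..<1/2} \<Longrightarrow> vector_derivative (parallelogram_path v w) (at t) = 4 * w"
    and "t \<in> {1/2<..<3/4} \<Longrightarrow> vector_derivative (parallelogram_path v w) (at t) = 4 * (-v)"
    and "t \<in> {3/4<..<1} \<Longrightarrow> vector_derivative (parallelogram_path v w) (at t) = 4 * (-w)"
proof -
  have q1: "t \<in> {0<..<1/4} \<Longrightarrow> parallelogram_path v w differentiable at t \<and> vector_derivative (parallelogram_path v w) (at t) = 4 * v"
    by (rule path_quarter[OF _ par_formula(1)])
  have q2: "t \<in> {1/4<..<1/2} \<Longrightarrow> parallelogram_path v w differentiable at t \<and> vector_derivative (parallelogram_path v w) (at t) = 4 * w"
    by (rule path_quarter[OF _ par_formula(2)])
  have q3: "t \<in> {1/2<..<3/4} \<Longrightarrow> parallelogram_path v w differentiable at t \<and> vector_derivative (parallelogram_path v w) (at t) = 4 * (-v)"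
    by (rule path_quarter[OF _ par_formula(3)])
  have q4: "t \<in> {3/4<..<1} \<Longrightarrow> parallelogram_path v w differentiable at t \<and> vector_derivative (parallelogram_path v w) (at t) = 4 * (-w)"
    by (rule path_quarter[OF _ par_formula(4)])
  have "t \<in> {0<..<1/4} \<or> t \<in> {1/4<..<1/2} \<or> t \<in> {1/2<..<3/4} \<or> t \<in> {3/4<..<1}"
    using assms by auto
  then show "parallelogram_path v w differentiable at t" using q1 q2 q3 q4 by blast
  show "t \<in> {0<..<1/4} \<Longrightarrow> vector_derivative (parallelogram_path v w) (at t) = 4 * v" using q1 by blast
  show "t \<in> {1/4<..<1/2} \<Longrightarrow> vector_derivative (parallelogram_path v w) (at t) = 4 * w" using q2 by blast
  show "t \<in> {1/2<..<3/4} \<Longrightarrow> vector_derivative (parallelogram_path v w) (at t) = 4 * (-v)" using q3 by blast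
  show "t \<in> {3/4<..<1} \<Longrightarrow> vector_derivative (parallelogram_path v w) (at t) = 4 * (-w)" using q4 by blast
qed



lemma quarter_step:
  assumes l: "l > 0" and d: "d \<noteq> 0" and S0: "finite S0" and cu: "continuous_on {0..1} u"
    and du: "\<forall>t\<in>{0<..<1} - S0. (u has_vector_derivative prytz_ode l (vector_derivative \<gamma> (at t)) (u t)) (at t)"
    and sub: "0 \<le> lo" "lo \<le> hi" "hi \<le> 1"
    and vd: "\<And>t. t \<in> {lo<..<hi} \<Longrightarrow> vector_derivative \<gamma> (at t) = d"
    and ul: "cmod (u lo) = 1"
  shows "u hi = Phi l d (hi - lo) (u lo)"
proof (rule seg_unique[where a=lo and b=hi and u=u and t=hi, OF l d _ ul S0])
  show "continuous_on {lo..hi} u" using cu by (rule continuous_on_subset) (use sub in auto)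
  show "hi \<in> {lo..hi}" using sub by auto
  fix t assume t: "t \<in> {lo<..<hi} - S0"
  then have "t \<in> {0<..<1} - S0" using sub by auto
  then have "(u has_vector_derivative prytz_ode l (vector_derivative \<gamma> (at t)) (u t)) (at t)" using du by blast
  moreover have "vector_derivative \<gamma> (at t) = d" using vd t by blast
  ultimately show "(u has_vector_derivative prytz_ode l d (u t)) (at t)" by simp
qed

lemma holonomy_formula:
  assumes l: "l > 0" and v: "v \<noteq> 0" and w: "w \<noteq> 0" and z: "cmod z = 1"
  shows "prytz_holonomy l (parallelogram_path v w) z =
    Phi l (4 * (-w)) (1/4) (Phi l (4 * (-v)) (1/4) (Phi l (4 * w) (1/4) (Phi l (4 * v) (1/4) z)))"
proof -
  define \<gamma> where "\<gamma> = parallelogram_path v w"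
  define d1 where "d1 = 4 * v"
  define d2 where "d2 = 4 * w"
  define d3 where "d3 = 4 * (-v)"
  define d4 where "d4 = 4 * (-w)"
  have n1: "d1 \<noteq> 0" and n2: "d2 \<noteq> 0" and n3: "d3 \<noteq> 0" and n4: "d4 \<noteq> 0"
    using v w by (auto simp: d1_def d2_def d3_def d4_def)
  define z1 where "z1 = Phi l d1 (1/4) z"
  define z2 where "z2 = Phi l d2 (1/4) z1"
  define z3 where "z3 = Phi l d3 (1/4) z2"
  define z4 where "z4 = Phi l d4 (1/4) z3"
  have c1: "cmod z1 = 1" unfolding z1_def using Phi_circle[OF n1 z] .
  have c2: "cmod z2 = 1" unfolding z2_def using Phi_circle[OF n2 c1] .
  have c3: "cmod z3 = 1" unfolding z3_def using Phi_circle[OF n3 c2] .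
  define F1 where "F1 = (\<lambda>t. Phi l d1 (t - 0) z)"
  define F2 where "F2 = (\<lambda>t. Phi l d2 (t - 1/4) z1)"
  define F3 where "F3 = (\<lambda>t. Phi l d3 (t - 1/2) z2)"
  define F4 where "F4 = (\<lambda>t. Phi l d4 (t - 3/4) z3)"
  define G3 where "G3 = (\<lambda>t. if t \<le> 3/4 then F3 t else F4 t)"
  define G2 where "G2 = (\<lambda>t. if t \<le> 1/2 then F2 t else G3 t)"
  define U where "U = (\<lambda>t. if t \<le> 1/4 then F1 t else G2 t)"
  have cF1: "continuous_on X F1" for X unfolding F1_def by (rule Phi_cont[OF l n1 z])
  have cF2: "continuous_on X F2" for X unfolding F2_def by (rule Phi_cont[OF l n2 c1])
  have cF3: "continuous_on X F3" for X unfolding F3_def by (rule Phi_cont[OF l n3 c2])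
  have cF4: "continuous_on X F4" for X unfolding F4_def by (rule Phi_cont[OF l n4 c3])
  have m3: "F3 (3/4) = F4 (3/4)" by (simp add: F3_def F4_def z3_def Phi_zero)
  have m2: "F2 (1/2) = G3 (1/2)" by (simp add: F2_def G3_def F3_def z2_def Phi_zero)
  have m1: "F1 (1/4) = G2 (1/4)" by (simp add: F1_def G2_def F2_def z1_def Phi_zero)
  have cG3: "continuous_on UNIV G3" unfolding G3_def
    apply (rule continuous_on_cases_le[OF cF3 cF4 continuous_on_id])
    using m3 by blast
  have cG2: "continuous_on UNIV G2" unfolding G2_def
    apply (rule continuous_on_cases_le[OF cF2 continuous_on_subset[OF cG3] continuous_on_id])
    using m2 by blast+
  have cU: "continuous_on UNIV U" unfolding U_def
    apply (rule continuous_on_cases_le[OF cF1 continuous_on_subset[OF cG2] continuous_on_id])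
    using m1 by blast+
  have U1: "U 1 = z4" by (simp add: U_def G2_def G3_def F4_def z4_def)
  have U0: "U 0 = z" by (simp add: U_def F1_def Phi_zero)
  have dU: "\<gamma> differentiable at t \<and> (U has_vector_derivative prytz_ode l (vector_derivative \<gamma> (at t)) (U t)) (at t)"
    if t: "t \<in> {0<..<1} - {1/4, 1/2, 3/4}" for t
  proof -
    have diff: "\<gamma> differentiable at t" unfolding \<gamma>_def by (rule par_deriv(1)[OF t])
    have "t \<in> {0<..<1/4} \<or> t \<in> {1/4<..<1/2} \<or> t \<in> {1/2<..<3/4} \<or> t \<in> {3/4<..<1}"
      using t by auto
    moreover
    { assume q: "t \<in> {0<..<1/4}"
      have hF1: "(F1 has_vector_derivative prytz_ode l d1 (F1 t)) (at t)"
        unfolding F1_def by (rule Phi_deriv_shift[OF l n1 z])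
      have vd: "vector_derivative \<gamma> (at t) = d1" unfolding \<gamma>_def d1_def by (rule par_deriv(2)[OF t q])
      have "(U has_vector_derivative prytz_ode l d1 (F1 t)) (at t)"
        by (rule has_vector_derivative_transform_within_open[OF hF1, of "{0<..<1/4}"])
           (use q in \<open>auto simp: U_def\<close>)
      moreover have "F1 t = U t" using q by (simp add: U_def)
      ultimately have ?thesis using diff vd by simp }
    moreover
    { assume q: "t \<in> {1/4<..<1/2}"
      have hF2: "(F2 has_vector_derivative prytz_ode l d2 (F2 t)) (at t)"
        unfolding F2_def by (rule Phi_deriv_shift[OF l n2 c1])
      have vd: "vector_derivative \<gamma> (at t) = d2" unfolding \<gamma>_def d2_def by (rule par_deriv(3)[OF t q])
      have "(U has_vector_derivative prytz_ode l d2 (F2 t)) (at t)"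
        by (rule has_vector_derivative_transform_within_open[OF hF2, of "{1/4<..<1/2}"])
           (use q in \<open>auto simp: U_def G2_def\<close>)
      moreover have "F2 t = U t" using q by (simp add: U_def G2_def)
      ultimately have ?thesis using diff vd by simp }
    moreover
    { assume q: "t \<in> {1/2<..<3/4}"
      have hF3: "(F3 has_vector_derivative prytz_ode l d3 (F3 t)) (at t)"
        unfolding F3_def by (rule Phi_deriv_shift[OF l n3 c2])
      have vd: "vector_derivative \<gamma> (at t) = d3" unfolding \<gamma>_def d3_def by (rule par_deriv(4)[OF t q])
      have "(U has_vector_derivative prytz_ode l d3 (F3 t)) (at t)"
        by (rule has_vector_derivative_transform_within_open[OF hF3, of "{1/2<..<3/4}"])
           (use q in \<open>auto simp: U_def G2_def G3_def\<close>)
      moreover have "F3 t = U t" using q by (simp add: U_def G2_def G3_def)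
      ultimately have ?thesis using diff vd by simp }
    moreover
    { assume q: "t \<in> {3/4<..<1}"
      have hF4: "(F4 has_vector_derivative prytz_ode l d4 (F4 t)) (at t)"
        unfolding F4_def by (rule Phi_deriv_shift[OF l n4 c3])
      have vd: "vector_derivative \<gamma> (at t) = d4" unfolding \<gamma>_def d4_def by (rule par_deriv(5)[OF t q])
      have "(U has_vector_derivative prytz_ode l d4 (F4 t)) (at t)"
        by (rule has_vector_derivative_transform_within_open[OF hF4, of "{3/4<..<1}"])
           (use q in \<open>auto simp: U_def G2_def G3_def\<close>)
      moreover have "F4 t = U t" using q by (simp add: U_def G2_def G3_def)
      ultimately have ?thesis using diff vd by simp }
    ultimately show ?thesis by blast
  qed
  have ex: "prytz_transport l \<gamma> z U"
    unfolding prytz_transport_def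
    using continuous_on_subset[OF cU] U0 dU by (intro conjI exI[of _ "{1/4, 1/2, 3/4}"]) auto
  have uniq: "u 1 = z4" if tr: "prytz_transport l \<gamma> z u" for u
  proof -
    obtain S0 where S0: "finite S0" and cu: "continuous_on {0..1} u" and u0: "u 0 = z"
      and du0: "\<forall>t\<in>{0<..<1} - S0. \<gamma> differentiable at t \<and>
        (u has_vector_derivative prytz_ode l (vector_derivative \<gamma> (at t)) (u t)) (at t)"
      using tr unfolding prytz_transport_def by blast
    have du: "\<forall>t\<in>{0<..<1} - S0. (u has_vector_derivative prytz_ode l (vector_derivative \<gamma> (at t)) (u t)) (at t)"
      using du0 by blast
    have "u (1/4) = Phi l d1 (1/4 - 0) (u 0)"
      by (rule quarter_step[OF l n1 S0 cu du]) (use u0 z par_deriv(2) in \<open>auto simp: \<gamma>_def d1_def\<close>)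
    then have u1: "u (1/4) = z1" using u0 by (simp add: z1_def)
    have "u (1/2) = Phi l d2 (1/2 - 1/4) (u (1/4))"
      by (rule quarter_step[OF l n2 S0 cu du]) (use u1 c1 par_deriv(3) in \<open>auto simp: \<gamma>_def d2_def\<close>)
    then have u2: "u (1/2) = z2" using u1 by (simp add: z2_def)
    have "u (3/4) = Phi l d3 (3/4 - 1/2) (u (1/2))"
      by (rule quarter_step[OF l n3 S0 cu du]) (use u2 c2 par_deriv(4) in \<open>auto simp: \<gamma>_def d3_def\<close>)
    then have u3: "u (3/4) = z3" using u2 by (simp add: z3_def)
    have "u 1 = Phi l d4 (1 - 3/4) (u (3/4))"
      by (rule quarter_step[OF l n4 S0 cu du]) (use u3 c3 par_deriv(5) in \<open>auto simp: \<gamma>_def d4_def\<close>)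
    then show "u 1 = z4" using u3 by (simp add: z4_def)
  qed
  have "prytz_holonomy l \<gamma> z = z4"
    unfolding prytz_holonomy_def
  proof (rule the_equality)
    show "\<exists>u. prytz_transport l \<gamma> z u \<and> u 1 = z4" using ex U1 by blast
    fix x assume "\<exists>u. prytz_transport l \<gamma> z u \<and> u 1 = x"
    then show "x = z4" using uniq by blast
  qed
  then show ?thesis unfolding \<gamma>_def z4_def z3_def z2_def z1_def d1_def d2_def d3_def d4_def .
qed



lemma trace_alg:
  fixes ca sa cb sb e c :: complex
  assumes r: "cnj ca = ca" "cnj sa = sa" "cnj cb = cb" "cnj sb = sb"
    and h: "e * cnj e = 1" "c * cnj c = 1" "ca * ca - sa * sa = 1" "cb * cb - sb * sb = 1"
  shows "fst (mmul (cb, sb * (c * e)) (mmul (ca, sa * e) (mmul (cb, -(sb * (c * e))) (ca, -(sa * e)))))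
       + cnj (fst (mmul (cb, sb * (c * e)) (mmul (ca, sa * e) (mmul (cb, -(sb * (c * e))) (ca, -(sa * e))))))
       = 2 + sa^2 * sb^2 * (c - cnj c)^2"
  unfolding mmul_def fst_conv snd_conv complex_cnj_mult complex_cnj_add complex_cnj_minus complex_cnj_cnj r
  using h by algebra

lemma sgn4: "sgn (4::complex) = 1"
  by (simp add: sgn_div_norm scaleR_conv_of_real)

lemma Phi_quarter:
  "Phi l (4 * B) (1/4) z = mob (of_real (cosh (cmod B / (2 * l)))) (- (of_real (sinh (cmod B / (2 * l))) * sgn B)) z"
  by (simp add: Phi_def norm_mult sgn_mult sgn4)

lemma Phi_quarter_neg:
  "Phi l (4 * (-B)) (1/4) z = mob (of_real (cosh (cmod B / (2 * l)))) (of_real (sinh (cmod B / (2 * l))) * sgn B) z"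
  by (simp add: Phi_def norm_mult sgn_mult sgn4)

theorem mainTheorem6:
  fixes v w :: complex and \<theta> l :: real
  assumes "v \<noteq> 0" "w \<noteq> 0" "0 < \<theta>" "\<theta> < pi" "sgn w = cis \<theta> * sgn v" "l > 0"
  defines "H \<equiv> prytz_holonomy l (parallelogram_path v w)"
    and "s \<equiv> sinh (cmod v / (2 * l)) * sinh (cmod w / (2 * l)) * sin \<theta>"
  shows "(\<exists>\<alpha> \<beta>. (cmod \<alpha>)\<^sup>2 - (cmod \<beta>)\<^sup>2 = 1 \<and>
             \<alpha> + cnj \<alpha> = complex_of_real (2 - 4 * s\<^sup>2) \<and>
             (\<forall>z. cmod z = 1 \<longrightarrow> H z = (\<alpha> * z + \<beta>) / (cnj \<beta> * z + cnj \<alpha>)))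
       \<and> (s > 1 \<longrightarrow> (\<exists>a r. a \<noteq> r \<and> {z. cmod z = 1 \<and> H z = z} = {a, r} \<and>
                          circle_attracting_fp H a \<and> circle_repelling_fp H r))
       \<and> (s < 1 \<longrightarrow> (\<forall>z. cmod z = 1 \<longrightarrow> H z \<noteq> z))"
proof -
  note v = assms(1) and w = assms(2) and l = assms(6)
  define a where "a = cmod v / (2 * l)"
  define b where "b = cmod w / (2 * l)"
  define ca where "ca = complex_of_real (cosh a)"
  define sa where "sa = complex_of_real (sinh a)"
  define cb where "cb = complex_of_real (cosh b)"
  define sb where "sb = complex_of_real (sinh b)"
  define e where "e = sgn v"
  define c where "c = cis \<theta>"
  have f: "sgn w = c * e" unfolding c_def e_def using assms(5) .
  define M1 where "M1 = (ca, - (sa * e))"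
  define M2 where "M2 = (cb, - (sb * (c * e)))"
  define M3 where "M3 = (ca, sa * e)"
  define M4 where "M4 = (cb, sb * (c * e))"
  define P where "P = mmul M4 (mmul M3 (mmul M2 M1))"
  have s1: "su (fst M1) (snd M1)" unfolding M1_def ca_def sa_def e_def using su_boost[of "-1" v a] v by simp
  have s2: "su (fst M2) (snd M2)" unfolding M2_def cb_def sb_def using su_boost[of "-1" w b] w f by simp
  have s3: "su (fst M3) (snd M3)" unfolding M3_def ca_def sa_def e_def using su_boost[of "1" v a] v by simp
  have s4: "su (fst M4) (snd M4)" unfolding M4_def cb_def sb_def using su_boost[of "1" w b] w f by simp
  have s21: "su (fst (mmul M2 M1)) (snd (mmul M2 M1))" using su_mmul[OF s2 s1] by simp
  have s321: "su (fst (mmul M3 (mmul M2 M1))) (snd (mmul M3 (mmul M2 M1)))" using su_mmul[OF s3 s21] by simp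
  have sP: "su (fst P) (snd P)" unfolding P_def using su_mmul[OF s4 s321] by simp
  have hH: "H z = mob (fst P) (snd P) z" if z: "cmod z = 1" for z
  proof -
    have "H z = Phi l (4 * (-w)) (1/4) (Phi l (4 * (-v)) (1/4) (Phi l (4 * w) (1/4) (Phi l (4 * v) (1/4) z)))"
      unfolding H_def by (rule holonomy_formula[OF l v w z])
    also have "\<dots> = mob (fst M4) (snd M4) (mob (fst M3) (snd M3) (mob (fst M2) (snd M2) (mob (fst M1) (snd M1) z)))"
      unfolding Phi_quarter Phi_quarter_neg M1_def M2_def M3_def M4_def ca_def sa_def cb_def sb_def a_def b_def
      by (simp add: f e_def[symmetric])
    also have "mob (fst M2) (snd M2) (mob (fst M1) (snd M1) z) = mob (fst (mmul M2 M1)) (snd (mmul M2 M1)) z"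
      using mob_comp[OF s2 s1 z] by simp
    also have "mob (fst M3) (snd M3) (mob (fst (mmul M2 M1)) (snd (mmul M2 M1)) z) = mob (fst (mmul M3 (mmul M2 M1))) (snd (mmul M3 (mmul M2 M1))) z"
      using mob_comp[OF s3 s21 z] by simp
    also have "mob (fst M4) (snd M4) (mob (fst (mmul M3 (mmul M2 M1))) (snd (mmul M3 (mmul M2 M1))) z) = mob (fst P) (snd P) z"
      using mob_comp[OF s4 s321 z] unfolding P_def by simp
    finally show ?thesis .
  qed
  have tr: "fst P + cnj (fst P) = complex_of_real (2 - 4 * s\<^sup>2)"
  proof -
    have "fst P + cnj (fst P) = 2 + sa^2 * sb^2 * (c - cnj c)^2"
      unfolding P_def M1_def M2_def M3_def M4_def
      by (rule trace_alg) (use circ[of "cis \<theta>"] in \<open>auto simp: ca_def sa_def cb_def sb_def c_def e_def sgn_cnj[OF v] cs_id\<close>)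
    also have "c - cnj c = 2 * \<i> * of_real (sin \<theta>)" unfolding c_def by (simp add: complex_eq_iff)
    also have "2 + sa^2 * sb^2 * (2 * \<i> * of_real (sin \<theta>))^2 = complex_of_real (2 - 4 * s\<^sup>2)"
      unfolding s_def sa_def sb_def a_def b_def by (simp add: power_mult_distrib algebra_simps)
    finally show ?thesis .
  qed
  have ReP: "Re (fst P) = 1 - 2 * s\<^sup>2" using arg_cong[OF tr, of Re] by simp
  have spos: "s > 0"
  proof -
    have "a > 0" unfolding a_def using v l by simp
    moreover have "b > 0" unfolding b_def using w l by simp
    moreover have "sin \<theta> > 0" using assms(3,4) by (rule sin_gt_zero)
    ultimately show ?thesis unfolding s_def a_def b_def by simp
  qed
  have part1: "\<exists>\<alpha> \<beta>. (cmod \<alpha>)\<^sup>2 - (cmod \<beta>)\<^sup>2 = 1 \<and>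
             \<alpha> + cnj \<alpha> = complex_of_real (2 - 4 * s\<^sup>2) \<and>
             (\<forall>z. cmod z = 1 \<longrightarrow> H z = (\<alpha> * z + \<beta>) / (cnj \<beta> * z + cnj \<alpha>))"
    using sP tr hH unfolding su_cmod mob_def by blast
  have part2: "s > 1 \<longrightarrow> (\<exists>a r. a \<noteq> r \<and> {z. cmod z = 1 \<and> H z = z} = {a, r} \<and>
                          circle_attracting_fp H a \<and> circle_repelling_fp H r)"
  proof
    assume "s > 1"
    then have "s\<^sup>2 > 1" by (simp add: one_less_power)
    then have "Re (fst P) < -1" using ReP by simp
    then show "\<exists>a r. a \<noteq> r \<and> {z. cmod z = 1 \<and> H z = z} = {a, r} \<and>
                          circle_attracting_fp H a \<and> circle_repelling_fp H r"
      using hyperbolic[OF sP _ hH] by blast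
  qed
  have part3: "s < 1 \<longrightarrow> (\<forall>z. cmod z = 1 \<longrightarrow> H z \<noteq> z)"
  proof (intro impI allI)
    fix z :: complex assume s: "s < 1" and z: "cmod z = 1"
    have "s\<^sup>2 < 1" using s spos by (simp add: power_less_one_iff abs_square_less_1)
    moreover have "s\<^sup>2 > 0" using spos by simp
    ultimately have "-1 < Re (fst P)" "Re (fst P) < 1" using ReP by auto
    then show "H z \<noteq> z" using elliptic_nofix[OF sP _ _ z] hH[OF z] by simp
  qed
  show ?thesis using part1 part2 part3 by blast
qed

end
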